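(* Let $\Gamma$ be a connected finite simple graph on $N\ge3$ vertices with minimum degree $d\ge3$ and $\varepsilon>\frac{\sqrt{d-1}}{d}$. If $u\ne v$ are vertices with $\mathcal N(u)\cap\mathcal N(v)\ne\emptyset$, then $$\big|\{w\in\mathcal N(u)\triangle\mathcal N(v):\deg w\in\{d,d+1\}\}\big|\ge 2d-1.$$
   Context: For a finite simple graph $\Gamma=(V,E)$ without isolated vertices, $\deg v$ is the number of neighbours of $v$ and $\mathcal N(v)=\{w\in V: w\sim v\}$; $\triangle$ denotes symmetric difference of sets. The normalized Laplacian acts on functions $f:V\to\mathbb R$ by $\Delta f(v)=f(v)-\frac{1}{\deg v}\sum_{w\sim v}f(w)$; its eigenvalues are $0=\lambda_1\le\lambda_2\le\dots\le\lambda_N$, and $\varepsilon:=\min_i|1-\lambda_i|$. $d$ denotes the minimum vertex degree. *)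

theory Defs
  imports Complex_Main
begin

definition simple_graph :: "'a set \<Rightarrow> ('a \<Rightarrow> 'a \<Rightarrow> bool) \<Rightarrow> bool" where
  "simple_graph V E \<longleftrightarrow> finite V \<and> (\<forall>x y. E x y \<longrightarrow> E y x) \<and> (\<forall>x. \<not> E x x)
     \<and> (\<forall>x y. E x y \<longrightarrow> x \<in> V \<and> y \<in> V)"

definition nbhd :: "'a set \<Rightarrow> ('a \<Rightarrow> 'a \<Rightarrow> bool) \<Rightarrow> 'a \<Rightarrow> 'a set" where
  "nbhd V E v = {w \<in> V. E w v}"

definition deg :: "'a set \<Rightarrow> ('a \<Rightarrow> 'a \<Rightarrow> bool) \<Rightarrow> 'a \<Rightarrow> nat" where
  "deg V E v = card (nbhd V E v)"

definition connected_graph :: "'a set \<Rightarrow> ('a \<Rightarrow> 'a \<Rightarrow> bool) \<Rightarrow> bool" where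
  "connected_graph V E \<longleftrightarrow> (\<forall>x\<in>V. \<forall>y\<in>V. E\<^sup>*\<^sup>* x y)"

definition min_degree :: "'a set \<Rightarrow> ('a \<Rightarrow> 'a \<Rightarrow> bool) \<Rightarrow> nat" where
  "min_degree V E = Min (deg V E ` V)"

definition norm_laplacian :: "'a set \<Rightarrow> ('a \<Rightarrow> 'a \<Rightarrow> bool) \<Rightarrow> ('a \<Rightarrow> real) \<Rightarrow> 'a \<Rightarrow> real" where
  "norm_laplacian V E f v = f v - (\<Sum>w\<in>nbhd V E v. f w) / real (deg V E v)"

definition laplacian_eigenvalue :: "'a set \<Rightarrow> ('a \<Rightarrow> 'a \<Rightarrow> bool) \<Rightarrow> real \<Rightarrow> bool" where
  "laplacian_eigenvalue V E lam \<longleftrightarrow>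
     (\<exists>f. (\<exists>v\<in>V. f v \<noteq> 0) \<and> (\<forall>v\<in>V. norm_laplacian V E f v = lam * f v))"

definition spectral_eps :: "'a set \<Rightarrow> ('a \<Rightarrow> 'a \<Rightarrow> bool) \<Rightarrow> real" where
  "spectral_eps V E = Min {\<bar>1 - lam\<bar> | lam. laplacian_eigenvalue V E lam}"

definition sym_diff :: "'a set \<Rightarrow> 'a set \<Rightarrow> 'a set" where
  "sym_diff A B = (A - B) \<union> (B - A)"

end

theory Submission imports Defs "HOL-Analysis.Analysis" "HOL-Library.Function_Algebras" begin

definition ipr :: "'a set \<Rightarrow> ('a \<Rightarrow> 'a \<Rightarrow> bool) \<Rightarrow> ('a \<Rightarrow> real) \<Rightarrow> ('a \<Rightarrow> real) \<Rightarrow> real" where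
  "ipr V E f g = (\<Sum>x\<in>V. real (deg V E x) * f x * g x)"

definition PP :: "'a set \<Rightarrow> ('a \<Rightarrow> 'a \<Rightarrow> bool) \<Rightarrow> ('a \<Rightarrow> real) \<Rightarrow> 'a \<Rightarrow> real" where
  "PP V E f x = (\<Sum>w\<in>nbhd V E x. f w) / real (deg V E x)"

lemma sum_fun_apply: "finite A \<Longrightarrow> (\<Sum>x\<in>A. f x) y = (\<Sum>x\<in>A. (f x) y)"
  by (induction A rule: finite_induct) auto

locale gctx =
  fixes V :: "'a set" and E :: "'a \<Rightarrow> 'a \<Rightarrow> bool"
  assumes sg: "simple_graph V E" and degpos: "\<And>x. x \<in> V \<Longrightarrow> deg V E x > 0"
begin

lemma finV: "finite V" using sg by (simp add: simple_graph_def)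
lemma symE: "E x y \<Longrightarrow> E y x" using sg by (simp add: simple_graph_def)
lemma EV: "E x y \<Longrightarrow> x \<in> V \<and> y \<in> V" using sg by (simp add: simple_graph_def)
lemma nbV: "nbhd V E x \<subseteq> V" by (auto simp: nbhd_def)
lemma finN: "finite (nbhd V E x)" using finV nbV finite_subset by blast

lemma ip_P: "ipr V E (PP V E a) b = (\<Sum>x\<in>V. \<Sum>w\<in>V. if E w x then a w * b x else 0)"
proof -
  have "ipr V E (PP V E a) b = (\<Sum>x\<in>V. (\<Sum>w\<in>nbhd V E x. a w) * b x)"
    unfolding ipr_def PP_def using degpos by (intro sum.cong) auto
  also have "\<dots> = (\<Sum>x\<in>V. \<Sum>w\<in>V. if E w x then a w * b x else 0)"
    by (intro sum.cong refl) (simp add: sum_distrib_right nbhd_def sum.inter_filter finV, intro sum.cong, auto)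
  finally show ?thesis .
qed

lemma selfadj: "ipr V E (PP V E a) b = ipr V E a (PP V E b)"
proof -
  have "ipr V E a (PP V E b) = ipr V E (PP V E b) a" unfolding ipr_def by (simp add: mult_ac)
  also have "\<dots> = (\<Sum>x\<in>V. \<Sum>w\<in>V. if E w x then b w * a x else 0)" by (rule ip_P)
  also have "\<dots> = (\<Sum>w\<in>V. \<Sum>x\<in>V. if E w x then b w * a x else 0)" by (rule sum.swap)
  also have "\<dots> = (\<Sum>w\<in>V. \<Sum>x\<in>V. if E x w then a x * b w else 0)"
    by (intro sum.cong refl) (auto intro: symE simp: mult.commute)
  also have "\<dots> = ipr V E (PP V E a) b" by (rule ip_P[symmetric])
  finally show ?thesis ..
qed

lemma P_lin: "PP V E (\<lambda>y. f y + t * g y) x = PP V E f x + t * PP V E g x"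
  unfolding PP_def by (simp add: sum.distrib sum_distrib_left add_divide_distrib)

lemma P_cong: "(\<And>y. y \<in> V \<Longrightarrow> f y = g y) \<Longrightarrow> PP V E f x = PP V E g x"
  unfolding PP_def using nbV by (intro arg_cong2[where f="(/)"] sum.cong) auto

lemma ip_cong: "(\<And>y. y \<in> V \<Longrightarrow> f y = g y) \<Longrightarrow> ipr V E f h = ipr V E g h"
  unfolding ipr_def by (intro sum.cong) auto

lemma sqnn: "0 \<le> real n * (c::real) * c"
  by (metis mult.assoc mult_nonneg_nonneg of_nat_0_le_iff zero_le_square)

lemma ip_sq_nonneg: "ipr V E f f \<ge> 0"
  unfolding ipr_def by (intro sum_nonneg sqnn)

lemma ip_zero: "ipr V E f f = 0 \<Longrightarrow> x \<in> V \<Longrightarrow> f x = 0"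
proof -
  assume 0: "ipr V E f f = 0" and x: "x \<in> V"
  have "\<forall>y\<in>V. real (deg V E y) * f y * f y = 0"
    using 0 unfolding ipr_def by (subst sum_nonneg_eq_0_iff[symmetric]) (auto simp: finV sqnn)
  with x degpos[OF x] show ?thesis by auto
qed


lemma ip_sym: "ipr V E f g = ipr V E g f"
  unfolding ipr_def by (simp add: mult_ac)

lemma ip_quad: "ipr V E (\<lambda>y. f y + t * k y) (\<lambda>y. f y + t * k y)
   = ipr V E f f + 2 * t * ipr V E f k + t\<^sup>2 * ipr V E k k"
proof -
  have "\<And>y. real (deg V E y) * (f y + t * k y) * (f y + t * k y)
     = real (deg V E y) * f y * f y + 2 * t * (real (deg V E y) * f y * k y) + t\<^sup>2 * (real (deg V E y) * k y * k y)"
    by (simp add: algebra_simps power2_eq_square)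
  then show ?thesis unfolding ipr_def by (simp add: sum.distrib sum_distrib_left)
qed

lemma ip_lin: "ipr V E (\<lambda>y. a y - m * b y) h = ipr V E a h - m * ipr V E b h"
proof -
  have "\<And>y. real (deg V E y) * (a y - m * b y) * h y = real (deg V E y) * a y * h y - m * (real (deg V E y) * b y * h y)"
    by (simp add: algebra_simps)
  then show ?thesis unfolding ipr_def by (simp add: sum_subtractf sum_distrib_left)
qed

lemma ip_scale: "ipr V E (\<lambda>y. a * f y) (\<lambda>y. a * f y) = a\<^sup>2 * ipr V E f f"
  unfolding ipr_def sum_distrib_left by (intro sum.cong) (simp_all add: algebra_simps power2_eq_square)

lemma P_scale: "PP V E (\<lambda>y. a * f y) x = a * PP V E f x"
  unfolding PP_def by (simp add: sum_distrib_left)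

lemma P_lin': "PP V E (\<lambda>y. f y + t * g y) = (\<lambda>x. PP V E f x + t * PP V E g x)"
  by (rule ext) (rule P_lin)

lemma pt_le_ip: "y \<in> V \<Longrightarrow> f y * f y \<le> ipr V E f f"
proof -
  assume y: "y \<in> V"
  have "real (deg V E y) * f y * f y \<le> ipr V E f f"
    unfolding ipr_def using y finV by (intro member_le_sum sqnn) auto
  moreover have "f y * f y \<le> real (deg V E y) * f y * f y"
  proof -
    have "1 \<le> real (deg V E y)" using degpos[OF y] by simp
    then have "1 * (f y * f y) \<le> real (deg V E y) * (f y * f y)"
      by (intro mult_right_mono) auto
    then show ?thesis by (simp add: mult.assoc)
  qed
  ultimately show ?thesis by linarith
qed

lemma quad0:
  fixes B C :: real
  assumes C: "C \<ge> 0" and H: "\<And>t. 0 \<le> 2 * t * B + t\<^sup>2 * C"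
  shows "B = 0"
proof -
  define t where "t = - B / (C + 1)"
  have "0 \<le> 2 * t * B + t\<^sup>2 * C" by (rule H)
  then have "0 \<le> (C+1)\<^sup>2 * (2 * t * B + t\<^sup>2 * C)" using C by simp
  also have "(C+1)\<^sup>2 * (2 * t * B + t\<^sup>2 * C) = 2 * B * (t * (C+1)) * (C+1) + (t * (C+1))\<^sup>2 * C"
    by (simp add: algebra_simps power2_eq_square)
  also have "t * (C+1) = - B" unfolding t_def using C by simp
  also have "2 * B * (- B) * (C+1) + (- B)\<^sup>2 * C = - B\<^sup>2 * (C + 2)"
    by (simp add: algebra_simps power2_eq_square)
  finally have "B\<^sup>2 * (C + 2) \<le> 0" by simp
  then have "B\<^sup>2 \<le> 0" using C by (simp add: mult_le_0_iff)
  then show ?thesis by simp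
qed


lemma cont_ip: "continuous_on A (\<lambda>g::'a\<Rightarrow>real. ipr V E g g)"
  unfolding ipr_def
  by (intro continuous_intros continuous_on_subset[OF continuous_on_product_coordinates]) auto

lemma cont_PP: "continuous_on A (\<lambda>g::'a\<Rightarrow>real. PP V E g x)"
  unfolding PP_def divide_inverse
  by (intro continuous_intros continuous_on_subset[OF continuous_on_product_coordinates]) auto

lemma cont_ipP: "continuous_on A (\<lambda>g::'a\<Rightarrow>real. ipr V E (PP V E g) (PP V E g))"
  unfolding ipr_def
  by (intro continuous_intros cont_PP)

lemma exists_min:
  assumes "V \<noteq> {}"
  shows "\<exists>g \<mu>. (\<exists>x\<in>V. g x \<noteq> 0) \<and> \<mu> \<ge> 0 \<and> (\<forall>x\<in>V. PP V E (PP V E g) x = \<mu> * g x)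
     \<and> (\<forall>h. \<mu> * ipr V E h h \<le> ipr V E (PP V E h) (PP V E h))"
proof -
  define K where "K = PiE UNIV (\<lambda>x. if x \<in> V then {-1..1::real} else {0})"
  have "compactin (product_topology (\<lambda>i. euclidean) UNIV) K"
    unfolding K_def by (subst compactin_PiE) auto
  then have cK: "compact K" by (simp add: euclidean_product_topology)
  define Sp where "Sp = K \<inter> {g. ipr V E g g = 1}"
  have "closed {g. ipr V E g g = 1}"
    by (rule closed_Collect_eq[OF cont_ip continuous_on_const])
  with cK have cS: "compact Sp" unfolding Sp_def by auto
  obtain x0 where x0: "x0 \<in> V" using assms by auto
  define g0 where "g0 = (\<lambda>y. if y = x0 then 1 / sqrt (real (deg V E x0)) else 0)"
  have d0: "real (deg V E x0) \<ge> 1" using degpos[OF x0] by simp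
  have p1: "0 < 1 / sqrt (real (deg V E x0))" using d0 by simp
  have p2: "1 / sqrt (real (deg V E x0)) \<le> 1" using d0 by simp
  have p3: "-1 \<le> 1 / sqrt (real (deg V E x0))" using p1 by linarith
  have "g0 \<in> K" unfolding K_def g0_def using x0 p3 p2 by (auto simp del: divide_const_simps)
  moreover have "ipr V E g0 g0 = 1"
  proof -
    have "ipr V E g0 g0 = (\<Sum>y\<in>V. if y = x0 then real (deg V E x0) * (1 / sqrt (real (deg V E x0)))\<^sup>2 else 0)"
      unfolding ipr_def g0_def by (intro sum.cong) (auto simp: power2_eq_square)
    also have "\<dots> = 1" using x0 finV d0 by (simp add: power_divide)
    finally show ?thesis .
  qed
  ultimately have "Sp \<noteq> {}" unfolding Sp_def by auto
  from continuous_attains_inf[OF cS this cont_ipP]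
  obtain g where gS: "g \<in> Sp" and gmin: "\<And>y. y \<in> Sp \<Longrightarrow> ipr V E (PP V E g) (PP V E g) \<le> ipr V E (PP V E y) (PP V E y)"
    by blast
  define \<mu> where "\<mu> = ipr V E (PP V E g) (PP V E g)"
  have g1: "ipr V E g g = 1" using gS unfolding Sp_def by auto
  have mu0: "\<mu> \<ge> 0" unfolding \<mu>_def by (rule ip_sq_nonneg)
  have allh: "\<mu> * ipr V E h h \<le> ipr V E (PP V E h) (PP V E h)" for h
  proof (cases "ipr V E h h = 0")
    case True then show ?thesis using ip_sq_nonneg by simp
  next
    case False
    then have hp: "ipr V E h h > 0" using ip_sq_nonneg[of h] by simp
    define c where "c = sqrt (ipr V E h h)"
    have cp: "c > 0" unfolding c_def using hp by simp
    have cc: "c\<^sup>2 = ipr V E h h" unfolding c_def using hp by simp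
    define h' where "h' = (\<lambda>y. if y \<in> V then (1/c) * h y else 0)"
    have bnd: "\<bar>h y\<bar> \<le> c" if "y \<in> V" for y
    proof -
      have "(h y)\<^sup>2 \<le> c\<^sup>2" using pt_le_ip[OF that, of h] cc by (simp add: power2_eq_square)
      then show ?thesis using cp power2_le_imp_le[of "\<bar>h y\<bar>" c] by simp
    qed
    have "h' \<in> K" unfolding K_def h'_def using bnd cp
      by (auto simp: abs_le_iff divide_le_eq le_divide_eq) (smt (verit) bnd)
    moreover have e1: "ipr V E h' h' = ipr V E (\<lambda>y. (1/c) * h y) (\<lambda>y. (1/c) * h y)"
      unfolding ipr_def h'_def by (intro sum.cong) auto
    have "ipr V E h' h' = 1" unfolding e1 ip_scale using cc cp hp by (simp add: power_divide)
    ultimately have "h' \<in> Sp" unfolding Sp_def by auto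
    then have "\<mu> \<le> ipr V E (PP V E h') (PP V E h')" unfolding \<mu>_def by (rule gmin)
    also have "PP V E h' = (\<lambda>x. (1/c) * PP V E h x)"
    proof
      fix x
      have "PP V E h' x = PP V E (\<lambda>y. (1/c) * h y) x" by (rule P_cong) (simp add: h'_def)
      then show "PP V E h' x = (1/c) * PP V E h x" using P_scale[of "1/c" h x] by simp
    qed
    also have "ipr V E (\<lambda>x. (1/c) * PP V E h x) (\<lambda>x. (1/c) * PP V E h x) = (1/c)\<^sup>2 * ipr V E (PP V E h) (PP V E h)"
      by (rule ip_scale)
    finally have "\<mu> * c\<^sup>2 \<le> ipr V E (PP V E h) (PP V E h)" using cp
      by (simp add: power_divide field_simps)
    then show ?thesis using cc by simp
  qed
  define r where "r = (\<lambda>y. PP V E (PP V E g) y - \<mu> * g y)"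
  have B0: "ipr V E r h = 0" for h
  proof -
    let ?B = "ipr V E (PP V E g) (PP V E h) - \<mu> * ipr V E g h"
    let ?C = "ipr V E (PP V E h) (PP V E h) - \<mu> * ipr V E h h"
    have C: "?C \<ge> 0" using allh[of h] by simp
    have "0 \<le> 2 * t * ?B + t\<^sup>2 * ?C" for t
    proof -
      have "\<mu> * ipr V E (\<lambda>y. g y + t * h y) (\<lambda>y. g y + t * h y) \<le>
            ipr V E (PP V E (\<lambda>y. g y + t * h y)) (PP V E (\<lambda>y. g y + t * h y))" by (rule allh)
      then have "\<mu> * (ipr V E g g + 2 * t * ipr V E g h + t\<^sup>2 * ipr V E h h) \<le>
           ipr V E (PP V E g) (PP V E g) + 2 * t * ipr V E (PP V E g) (PP V E h) + t\<^sup>2 * ipr V E (PP V E h) (PP V E h)"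
        unfolding P_lin' ip_quad .
      then show ?thesis unfolding g1 \<mu>_def[symmetric] by (simp add: algebra_simps)
    qed
    then have "?B = 0" by (intro quad0[OF C])
    moreover have "ipr V E r h = ?B" unfolding r_def ip_lin
      using selfadj[of "PP V E g" h] by simp
    ultimately show ?thesis by simp
  qed
  have "\<forall>x\<in>V. PP V E (PP V E g) x = \<mu> * g x"
    using ip_zero[OF B0[of r]] unfolding r_def by simp
  moreover have "\<exists>x\<in>V. g x \<noteq> 0"
  proof (rule ccontr)
    assume "\<not> ?thesis"
    then have "ipr V E g g = 0" unfolding ipr_def by simp
    with g1 show False by simp
  qed
  ultimately show ?thesis using mu0 allh by blast
qed


lemma eig_iff: "laplacian_eigenvalue V E lam \<longleftrightarrow>
   (\<exists>f. (\<exists>x\<in>V. f x \<noteq> 0) \<and> (\<forall>x\<in>V. PP V E f x = (1 - lam) * f x))"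
  unfolding laplacian_eigenvalue_def norm_laplacian_def PP_def[symmetric]
  by (intro ex_cong1 conj_cong refl ball_cong) (auto simp: algebra_simps)

lemma eig_orth:
  assumes f1: "\<forall>x\<in>V. PP V E f1 x = (1 - l1) * f1 x" and f2: "\<forall>x\<in>V. PP V E f2 x = (1 - l2) * f2 x"
    and ne: "l1 \<noteq> l2"
  shows "ipr V E f1 f2 = 0"
proof -
  have a: "ipr V E (PP V E f1) f2 = (1 - l1) * ipr V E f1 f2"
    unfolding ipr_def sum_distrib_left using f1 by (intro sum.cong) auto
  have b: "ipr V E f1 (PP V E f2) = (1 - l2) * ipr V E f1 f2"
    unfolding ipr_def sum_distrib_left using f2 by (intro sum.cong) auto
  from a b selfadj[of f1 f2] have "(1 - l1) * ipr V E f1 f2 = (1 - l2) * ipr V E f1 f2" by linarith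
  then have "ipr V E f1 f2 = 0 \<or> 1 - l1 = 1 - l2" by (simp only: mult_cancel_right)
  with ne show ?thesis by auto
qed

lemma eig_finite: "finite {lam. laplacian_eigenvalue V E lam}"
proof (rule ccontr)
  assume inf: "\<not> ?thesis"
  then obtain L where LS: "L \<subseteq> {lam. laplacian_eigenvalue V E lam}" and finL: "finite L"
    and cL: "card L = card V + 1"
    using infinite_arbitrarily_large by blast
  define ef where "ef = (\<lambda>lam. let f = (SOME f. (\<exists>x\<in>V. f x \<noteq> 0) \<and> (\<forall>x\<in>V. PP V E f x = (1 - lam) * f x))
     in (\<lambda>y. if y \<in> V then f y else 0))"
  have efp: "(\<exists>x\<in>V. ef lam x \<noteq> 0) \<and> (\<forall>x\<in>V. PP V E (ef lam) x = (1 - lam) * ef lam x) \<and> (\<forall>x. x \<notin> V \<longrightarrow> ef lam x = 0)"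
    if "lam \<in> L" for lam
  proof -
    let ?P = "\<lambda>f. (\<exists>x\<in>V. f x \<noteq> 0) \<and> (\<forall>x\<in>V. PP V E f x = (1 - lam) * f x)"
    have "\<exists>f. ?P f" using that LS eig_iff by blast
    then have sp: "?P (SOME f. ?P f)" by (rule someI_ex)
    define f where "f = (SOME f. ?P f)"
    have e: "ef lam = (\<lambda>y. if y \<in> V then f y else 0)" unfolding ef_def f_def Let_def by simp
    have "PP V E (ef lam) x = PP V E f x" for x unfolding e by (rule P_cong) simp
    then show ?thesis using sp unfolding f_def[symmetric] e by auto
  qed
  have orth: "ipr V E (ef l1) (ef l2) = 0" if "l1 \<in> L" "l2 \<in> L" "l1 \<noteq> l2" for l1 l2
    using efp[OF that(1)] efp[OF that(2)] that(3) by (intro eig_orth) auto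
  have nz: "ipr V E (ef l) (ef l) \<noteq> 0" if "l \<in> L" for l
    using efp[OF that] ip_zero by blast
  have inj: "inj_on ef L"
  proof (rule inj_onI)
    fix l1 l2 assume "l1 \<in> L" "l2 \<in> L" "ef l1 = ef l2"
    then show "l1 = l2" using orth nz by fastforce
  qed
  define A where "A = ef ` L"
  have cA: "card A = card V + 1" unfolding A_def using card_image[OF inj] cL by simp
  interpret vs: vector_space "\<lambda>(c::real) (f::'a\<Rightarrow>real). (\<lambda>x. c * f x)"
    by unfold_locales (auto simp: algebra_simps fun_eq_iff)
  define \<delta> where "\<delta> = (\<lambda>v::'a. (\<lambda>x::'a. if x = v then 1 else (0::real)))"
  have indep: "vs.independent A"
  proof (rule vs.independent_if_scalars_zero)
    show "finite A" unfolding A_def using finL by simp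
  next
    fix c :: "('a \<Rightarrow> real) \<Rightarrow> real" and f
    assume s0: "(\<Sum>x\<in>A. (\<lambda>y. c x * x y)) = 0" and fA: "f \<in> A"
    have finA: "finite A" unfolding A_def using finL by simp
    have pt: "(\<Sum>x\<in>A. c x * x z) = 0" for z
      using fun_cong[OF s0, of z] by (simp add: sum_fun_apply[OF finA])
    have "0 = (\<Sum>z\<in>V. real (deg V E z) * (\<Sum>x\<in>A. c x * x z) * f z)" by (simp add: pt)
    also have "\<dots> = (\<Sum>x\<in>A. c x * ipr V E x f)"
      unfolding ipr_def sum_distrib_left sum_distrib_right
      by (subst sum.swap) (simp add: mult_ac)
    also have "\<dots> = c f * ipr V E f f"
    proof -
      have "(\<Sum>x\<in>A. c x * ipr V E x f) = c f * ipr V E f f + (\<Sum>x\<in>A-{f}. c x * ipr V E x f)"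
        using sum.remove[OF finA fA] by simp
      moreover have "(\<Sum>x\<in>A-{f}. c x * ipr V E x f) = 0"
      proof (intro sum.neutral ballI)
        fix x assume "x \<in> A - {f}"
        then obtain l1 l2 where "l1 \<in> L" "l2 \<in> L" "x = ef l1" "f = ef l2" "l1 \<noteq> l2"
          using fA unfolding A_def by auto
        then show "c x * ipr V E x f = 0" using orth by simp
      qed
      ultimately show ?thesis by simp
    qed
    finally have "c f * ipr V E f f = 0" by simp
    moreover have "ipr V E f f \<noteq> 0" using fA nz unfolding A_def by auto
    ultimately show "c f = 0" by simp
  qed
  have spA: "A \<subseteq> vs.span (\<delta> ` V)"
  proof
    fix f assume fA: "f \<in> A"
    then obtain l where l: "l \<in> L" "f = ef l" unfolding A_def by auto
    have out: "f x = 0" if "x \<notin> V" for x using efp[OF l(1)] l(2) that by auto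
    have feq: "f = (\<Sum>v\<in>V. (\<lambda>x. f v * \<delta> v x))"
    proof
      fix x
      have "(\<Sum>v\<in>V. (\<lambda>x. f v * \<delta> v x)) x = (\<Sum>v\<in>V. f v * \<delta> v x)"
        by (rule sum_fun_apply[OF finV])
      also have "\<dots> = (\<Sum>v\<in>V. if x = v then f x else 0)"
        unfolding \<delta>_def by (intro sum.cong) auto
      also have "\<dots> = f x" using out finV by (cases "x \<in> V") auto
      finally show "f x = (\<Sum>v\<in>V. (\<lambda>x. f v * \<delta> v x)) x" ..
    qed
    have "(\<Sum>v\<in>V. (\<lambda>x. f v * \<delta> v x)) \<in> vs.span (\<delta> ` V)"
      by (intro vs.span_sum vs.span_scale vs.span_base) auto
    then show "f \<in> vs.span (\<delta> ` V)" using feq by simp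
  qed
  have "card A \<le> card (\<delta> ` V)"
    using vs.independent_span_bound[OF _ indep spA] finV by simp
  then show False using cA card_image_le[OF finV, of \<delta>] by simp
qed


lemma eps_bound:
  assumes "V \<noteq> {}"
  shows "(spectral_eps V E)\<^sup>2 * ipr V E h h \<le> ipr V E (PP V E h) (PP V E h)"
proof -
  obtain g \<mu> where gnz: "\<exists>x\<in>V. g x \<noteq> 0" and mu0: "\<mu> \<ge> 0"
    and geig: "\<forall>x\<in>V. PP V E (PP V E g) x = \<mu> * g x"
    and allh: "\<forall>h. \<mu> * ipr V E h h \<le> ipr V E (PP V E h) (PP V E h)"
    using exists_min[OF assms] by blast
  define s where "s = sqrt \<mu>"
  have s0: "s \<ge> 0" and ss: "s * s = \<mu>" unfolding s_def using mu0 by (auto simp: real_sqrt_mult_self)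
  have ex: "\<exists>lam. laplacian_eigenvalue V E lam \<and> \<bar>1 - lam\<bar> = s"
  proof (cases "\<exists>x\<in>V. PP V E g x + s * g x \<noteq> 0")
    case True
    define h where "h = (\<lambda>y. PP V E g y + s * g y)"
    have hev: "\<forall>x\<in>V. PP V E h x = (1 - (1 - s)) * h x"
    proof
      fix x assume x: "x \<in> V"
      have "PP V E h x = PP V E (PP V E g) x + s * PP V E g x" unfolding h_def by (rule P_lin)
      also have "\<dots> = s * h x" using geig x ss unfolding h_def by (simp add: algebra_simps)
      finally show "PP V E h x = (1 - (1 - s)) * h x" by simp
    qed
    have "laplacian_eigenvalue V E (1 - s)" unfolding eig_iff
    proof (intro exI conjI)
      show "\<exists>x\<in>V. h x \<noteq> 0" using True unfolding h_def by simp
    qed (rule hev)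
    then show ?thesis using s0 by auto
  next
    case False
    then have "\<forall>x\<in>V. PP V E g x = (1 - (1 + s)) * g x" by (simp add: algebra_simps eq_neg_iff_add_eq_0)
    then have "laplacian_eigenvalue V E (1 + s)" unfolding eig_iff using gnz by blast
    then show ?thesis using s0 by auto
  qed
  let ?S = "{\<bar>1 - lam\<bar> | lam. laplacian_eigenvalue V E lam}"
  have eqS: "?S = (\<lambda>lam. \<bar>1 - lam\<bar>) ` {lam. laplacian_eigenvalue V E lam}" by auto
  have finS: "finite ?S" unfolding eqS using eig_finite by simp
  have sS: "s \<in> ?S" using ex by auto
  have le: "spectral_eps V E \<le> s" unfolding spectral_eps_def using finS sS by (rule Min_le)
  have "spectral_eps V E \<in> ?S" unfolding spectral_eps_def using finS sS by (intro Min_in) auto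
  then have ge: "spectral_eps V E \<ge> 0" by auto
  have "(spectral_eps V E)\<^sup>2 \<le> \<mu>" using mult_mono[OF le le s0 ge] ss by (simp add: power2_eq_square)
  then have "(spectral_eps V E)\<^sup>2 * ipr V E h h \<le> \<mu> * ipr V E h h"
    using ip_sq_nonneg by (rule mult_right_mono)
  also have "\<dots> \<le> ipr V E (PP V E h) (PP V E h)" using allh by blast
  finally show ?thesis .
qed

end

lemma arith_fin:
  fixes D a K m :: real
  assumes D: "D \<ge> 3" and a: "a \<ge> 2 * D" and m: "m \<le> a - 2"
    and h: "(D - 1) / D\<^sup>2 * a < K / D + (m - K) / (D + 2)"
  shows "K > 2 * D - 2"
proof -
  have "(D - 1) / D\<^sup>2 * a < K / D + (a - 2 - K) / (D + 2)"
    using h m D by (smt (verit) divide_right_mono)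
  then have "(D - 1) / D\<^sup>2 * a * (D\<^sup>2 * (D + 2)) < (K / D + (a - 2 - K) / (D + 2)) * (D\<^sup>2 * (D + 2))"
    using D by (intro mult_strict_right_mono) auto
  moreover have "(D - 1) / D\<^sup>2 * a * (D\<^sup>2 * (D + 2)) = (D - 1) * a * (D + 2)"
    using D by (simp add: field_simps power2_eq_square)
  moreover have "(K / D + (a - 2 - K) / (D + 2)) * (D\<^sup>2 * (D + 2)) = K * D * (D + 2) + (a - 2 - K) * D\<^sup>2"
  proof -
    have "(K / D + (a - 2 - K) / (D + 2)) * (D\<^sup>2 * (D + 2)) = K / D * D * D * (D + 2) + (a - 2 - K) / (D + 2) * (D + 2) * D\<^sup>2"
      by (simp add: algebra_simps power2_eq_square)
    also have "\<dots> = K * D * (D + 2) + (a - 2 - K) * D\<^sup>2" using D by simp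
    finally show ?thesis .
  qed
  ultimately have "(D - 1) * a * (D + 2) < K * D * (D + 2) + (a - 2 - K) * D\<^sup>2" by simp
  then have "2 * D * K > a * (D - 2) + 2 * D\<^sup>2"
    by (simp add: algebra_simps power2_eq_square)
  moreover have "a * (D - 2) \<ge> 2 * D * (D - 2)" using a D by (intro mult_right_mono) auto
  ultimately have "2 * D * K > 2 * D * (2 * D - 2)" by (simp add: algebra_simps power2_eq_square)
  then show ?thesis using D by simp
qed

theorem mainTheorem20:
  fixes V :: "'a set" and E :: "'a \<Rightarrow> 'a \<Rightarrow> bool" and u v :: 'a
  assumes "simple_graph V E"
    and "connected_graph V E"
    and "card V \<ge> 3"
    and "min_degree V E \<ge> 3"
    and "spectral_eps V E > sqrt (real (min_degree V E) - 1) / real (min_degree V E)"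
    and "u \<in> V" and "v \<in> V" and "u \<noteq> v"
    and "nbhd V E u \<inter> nbhd V E v \<noteq> {}"
  shows "card {w \<in> sym_diff (nbhd V E u) (nbhd V E v).
            deg V E w \<in> {min_degree V E, min_degree V E + 1}} \<ge> 2 * min_degree V E - 1"
proof -
  define d where "d = min_degree V E"
  have finV: "finite V" using assms(1) by (simp add: simple_graph_def)
  have Vne: "V \<noteq> {}" using assms(6) by auto
  have dle: "d \<le> deg V E x" if "x \<in> V" for x
    unfolding d_def min_degree_def using finV that by (intro Min_le) auto
  have d3: "d \<ge> 3" using assms(4) d_def by simp
  interpret gctx V E
  proof
    show "simple_graph V E" by (rule assms(1))
    show "0 < deg V E x" if "x \<in> V" for x using dle[OF that] d3 by simp
  qed
  define f where "f = (\<lambda>y. (if y = u then 1 else 0) - (if y = v then (1::real) else 0))"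
  define S where "S = sym_diff (nbhd V E u) (nbhd V E v)"
  have SV: "S \<subseteq> V" unfolding S_def sym_diff_def nbhd_def by auto
  have finS: "finite S" using SV finV finite_subset by blast
  have ipf: "ipr V E f f = real (deg V E u) + real (deg V E v)"
  proof -
    have "ipr V E f f = (\<Sum>x\<in>V. (if x = u then real (deg V E u) else 0) + (if x = v then real (deg V E v) else 0))"
      unfolding ipr_def f_def using assms(8) by (intro sum.cong) auto
    also have "\<dots> = real (deg V E u) + real (deg V E v)"
      using finV assms(6,7) by (simp add: sum.distrib)
    finally show ?thesis .
  qed
  have Pf: "PP V E f x = ((if E u x then 1 else 0) - (if E v x then 1 else 0)) / real (deg V E x)" for x
  proof -
    have "(\<Sum>w\<in>nbhd V E x. f w) = (\<Sum>w\<in>nbhd V E x. if w = u then 1 else 0) - (\<Sum>w\<in>nbhd V E x. if w = v then 1 else 0)"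
      unfolding f_def by (simp add: sum_subtractf)
    also have "\<dots> = (if E u x then 1 else 0) - (if E v x then 1 else 0)"
      using finN assms(6,7) by (simp add: nbhd_def)
    finally show ?thesis unfolding PP_def by simp
  qed
  define T where "T = (\<Sum>x\<in>S. 1 / real (deg V E x))"
  have ipPf: "ipr V E (PP V E f) (PP V E f) = T"
  proof -
    have "ipr V E (PP V E f) (PP V E f) = (\<Sum>x\<in>V. if x \<in> S then 1 / real (deg V E x) else 0)"
      unfolding ipr_def
    proof (intro sum.cong refl)
      fix x assume x: "x \<in> V"
      have dp: "real (deg V E x) > 0" using degpos[OF x] by simp
      have eu: "E u x \<longleftrightarrow> x \<in> nbhd V E u" using x symE unfolding nbhd_def by blast
      have ev: "E v x \<longleftrightarrow> x \<in> nbhd V E v" using x symE unfolding nbhd_def by blast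
      show "real (deg V E x) * PP V E f x * PP V E f x = (if x \<in> S then 1 / real (deg V E x) else 0)"
        unfolding Pf S_def sym_diff_def using dp eu ev by (auto simp: field_simps power2_eq_square)
    qed
    also have "\<dots> = T" unfolding T_def using finV SV by (simp add: sum.If_cases Int_absorb1)
    finally show ?thesis .
  qed
  have bound: "(spectral_eps V E)\<^sup>2 * (real (deg V E u) + real (deg V E v)) \<le> T"
    using eps_bound[OF Vne, of f] ipf ipPf by simp
  define W where "W = {w \<in> S. deg V E w \<in> {d, d + 1}}"
  have WS: "W \<subseteq> S" unfolding W_def by auto
  have finW: "finite W" using finS WS finite_subset by blast
  have T_le: "T \<le> real (card W) / real d + real (card (S - W)) / real (d + 2)"
  proof -
    have "T = (\<Sum>x\<in>W. 1 / real (deg V E x)) + (\<Sum>x\<in>S - W. 1 / real (deg V E x))"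
      unfolding T_def using sum.subset_diff[OF WS finS] by (simp add: add.commute)
    moreover have "(\<Sum>x\<in>W. 1 / real (deg V E x)) \<le> real (card W) * (1 / real d)"
    proof (rule sum_bounded_above)
      fix x assume "x \<in> W"
      then have x: "x \<in> V" using WS SV by auto
      show "1 / real (deg V E x) \<le> 1 / real d" using dle[OF x] d3 by (simp add: frac_le)
    qed
    moreover have "(\<Sum>x\<in>S - W. 1 / real (deg V E x)) \<le> real (card (S - W)) * (1 / real (d + 2))"
    proof (rule sum_bounded_above)
      fix x assume xs: "x \<in> S - W"
      then have x: "x \<in> V" using SV by auto
      have "deg V E x \<ge> d + 2" using dle[OF x] xs unfolding W_def by auto
      then show "1 / real (deg V E x) \<le> 1 / real (d + 2)" using d3 by (simp add: frac_le)
    qed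
    ultimately show ?thesis by simp
  qed
  have cSW: "card (S - W) = card S - card W" using card_Diff_subset[OF finW WS] .
  have cWS: "card W \<le> card S" using card_mono[OF finS WS] .
  obtain c where c: "c \<in> nbhd V E u" "c \<in> nbhd V E v" using assms(9) by auto
  have cS: "card S \<le> deg V E u + deg V E v - 2"
  proof -
    have f1: "finite (nbhd V E u)" "finite (nbhd V E v)" using finN by auto
    have "card (nbhd V E u - nbhd V E v) \<le> card (nbhd V E u - {c})"
      using c f1 by (intro card_mono) auto
    also have "\<dots> = deg V E u - 1" using c f1 unfolding deg_def by simp
    finally have a1: "card (nbhd V E u - nbhd V E v) \<le> deg V E u - 1" .
    have "card (nbhd V E v - nbhd V E u) \<le> card (nbhd V E v - {c})"
      using c f1 by (intro card_mono) auto
    also have "\<dots> = deg V E v - 1" using c f1 unfolding deg_def by simp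
    finally have a2: "card (nbhd V E v - nbhd V E u) \<le> deg V E v - 1" .
    have "card S \<le> card (nbhd V E u - nbhd V E v) + card (nbhd V E v - nbhd V E u)"
      unfolding S_def sym_diff_def by (rule card_Un_le)
    with a1 a2 degpos[OF assms(6)] degpos[OF assms(7)] show ?thesis by linarith
  qed
  have du: "deg V E u \<ge> d" "deg V E v \<ge> d" using dle assms(6,7) by auto
  have eps_gt: "spectral_eps V E > sqrt (real d - 1) / real d" using assms(5) d_def by simp
  have e2: "(spectral_eps V E)\<^sup>2 > (real d - 1) / (real d)\<^sup>2"
  proof -
    have nn: "0 \<le> sqrt (real d - 1) / real d" using d3 by simp
    have "(sqrt (real d - 1) / real d)\<^sup>2 < (spectral_eps V E)\<^sup>2"
      using eps_gt nn by (intro power_strict_mono) auto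
    then show ?thesis using d3 by (simp add: power_divide)
  qed
  define a where "a = real (deg V E u) + real (deg V E v)"
  have apos: "a > 0" unfolding a_def using du d3 by simp
  have "(real d - 1) / (real d)\<^sup>2 * a < (spectral_eps V E)\<^sup>2 * a"
    using e2 apos by (rule mult_strict_right_mono)
  also have "\<dots> \<le> T" using bound a_def by simp
  also have "\<dots> \<le> real (card W) / real d + (real (card S) - real (card W)) / (real d + 2)"
    using T_le cSW cWS by (simp add: of_nat_diff add.commute)
  finally have main: "(real d - 1) / (real d)\<^sup>2 * a < real (card W) / real d + (real (card S) - real (card W)) / (real d + 2)" .
  have "real (card W) > 2 * real d - 2"
  proof (rule arith_fin[OF _ _ _ main])
    show "real d \<ge> 3" using d3 by simp
    show "a \<ge> 2 * real d" unfolding a_def using du by simp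
    show "real (card S) \<le> a - 2" unfolding a_def using cS du d3 by linarith
  qed
  then have "card W \<ge> 2 * d - 1" by linarith
  then show ?thesis unfolding W_def S_def d_def .
qed

end
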